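(* Let $n\ge 2$. The Haj\'os number of the symmetric cycle $D(C_{2^n+1})$ of order $2^n+1$ is at most $$\frac{n\left(2^{n+2}+n+5\right)}{2}-7.$$ Moreover, for every integer $m$ with $2^{n-1}+1<2m+1<2^n+1$, the Haj\'os number of the symmetric cycle $D(C_{2m+1})$ of order $2m+1$ is at most $$\frac{n\left(2^{n+2}+n+5\right)}{2}-5.$$
   Context: Digraphs are finite, without loops or multiple arcs. For a graph $G$, $D(G)$ is the symmetric digraph obtained by replacing each edge by a pair of opposite arcs; $D(K_3)$ is the complete symmetric digraph on 3 vertices and $D(C_k)$ the symmetric cycle of order $k$. The dichromatic number of a digraph is the minimum number of colors in a vertex coloring with no monochromatic directed cycle; odd symmetric cycles have dichromatic number 3. The directed Haj\'os operations are: (1) identifying a nonempty independent set $I$ of vertices: delete $I$, add a new vertex $v$, and add all arcs from $v$ to $\bigcup_{u\in I}N^+(u)$ and from $\bigcup_{u\in I}N^-(u)$ to $v$; (2) the directed Haj\'os join $(D_1,u_1,v_1)\triangledown(D_2,v_2,u_2)$ of disjoint digraphs $D_1,D_2$ with $u_1v_1\in A(D_1)$, $v_2u_2\in A(D_2)$: take the disjoint union, delete the arcs $u_1v_1$ and $v_2u_2$, identify $v_1$ and $v_2$ into a single vertex, and add the arc $u_1u_2$. The Haj\'os number of an $r$-dichromatic digraph $H$ is the minimum number of directed Haj\'os operations needed to obtain $H$ (up to isomorphism) from copies of the complete symmetric digraph $D(K_r)$, operations being applied to copies of $D(K_r)$ and to previously obtained digraphs. *)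

theory Defs
  imports Complex_Main
begin

text \<open>A digraph is a pair (vertex set, arc set) over the infinite vertex type nat,
  so that fresh vertices and disjoint copies are always available.\<close>
type_synonym digraph = "nat set \<times> (nat \<times> nat) set"

definition verts :: "digraph \<Rightarrow> nat set" where "verts G = fst G"
definition arcs :: "digraph \<Rightarrow> (nat \<times> nat) set" where "arcs G = snd G"

definition is_digraph :: "digraph \<Rightarrow> bool" where
  "is_digraph G \<longleftrightarrow> finite (verts G) \<and> arcs G \<subseteq> verts G \<times> verts G
     \<and> (\<forall>x. (x, x) \<notin> arcs G)"

definition digraph_iso :: "digraph \<Rightarrow> digraph \<Rightarrow> bool" where
  "digraph_iso G H \<longleftrightarrow> (\<exists>f. bij_betw f (verts G) (verts H) \<and>
     (\<forall>x\<in>verts G. \<forall>y\<in>verts G. (x, y) \<in> arcs G \<longleftrightarrow> (f x, f y) \<in> arcs H))"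

definition DK :: "nat \<Rightarrow> digraph" where
  "DK r = ({0..<r}, {(i, j). i < r \<and> j < r \<and> i \<noteq> j})"

definition DC :: "nat \<Rightarrow> digraph" where
  "DC k = ({0..<k}, {(i, j). i < k \<and> j < k \<and> i \<noteq> j \<and>
                              (j = (i + 1) mod k \<or> i = (j + 1) mod k)})"

definition acyclic_coloring :: "digraph \<Rightarrow> nat \<Rightarrow> (nat \<Rightarrow> nat) \<Rightarrow> bool" where
  "acyclic_coloring G k c \<longleftrightarrow> (\<forall>x\<in>verts G. c x < k) \<and>
     (\<forall>i. acyclic (arcs G \<inter> ({x. c x = i} \<times> {x. c x = i})))"

definition dichromatic_number :: "digraph \<Rightarrow> nat" where
  "dichromatic_number G = (LEAST k. \<exists>c. acyclic_coloring G k c)"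

definition identify :: "digraph \<Rightarrow> nat set \<Rightarrow> nat \<Rightarrow> digraph" where
  "identify G I v = (let f = (\<lambda>x. if x \<in> I then v else x) in
     (f ` verts G, (\<lambda>(a, b). (f a, f b)) ` arcs G))"

definition identification_ok :: "digraph \<Rightarrow> nat set \<Rightarrow> nat \<Rightarrow> bool" where
  "identification_ok G I v \<longleftrightarrow> I \<noteq> {} \<and> I \<subseteq> verts G \<and>
     (\<forall>x\<in>I. \<forall>y\<in>I. (x, y) \<notin> arcs G) \<and> v \<notin> verts G - I"

definition hajos_join :: "digraph \<Rightarrow> nat \<Rightarrow> nat \<Rightarrow> digraph \<Rightarrow> nat \<Rightarrow> nat \<Rightarrow> nat \<Rightarrow> digraph" where
  "hajos_join G1 u1 v1 G2 v2 u2 w = (let f = (\<lambda>x. if x = v1 \<or> x = v2 then w else x) in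
     (f ` (verts G1 \<union> verts G2),
      ((\<lambda>(a, b). (f a, f b)) ` ((arcs G1 - {(u1, v1)}) \<union> (arcs G2 - {(v2, u2)})))
        \<union> {(u1, u2)}))"

definition join_ok :: "digraph \<Rightarrow> nat \<Rightarrow> nat \<Rightarrow> digraph \<Rightarrow> nat \<Rightarrow> nat \<Rightarrow> nat \<Rightarrow> bool" where
  "join_ok G1 u1 v1 G2 v2 u2 w \<longleftrightarrow> verts G1 \<inter> verts G2 = {} \<and>
     (u1, v1) \<in> arcs G1 \<and> (v2, u2) \<in> arcs G2 \<and> w \<notin> (verts G1 \<union> verts G2) - {v1, v2}"

definition available :: "nat \<Rightarrow> digraph set \<Rightarrow> digraph set" where
  "available r S = {G. is_digraph G \<and> (digraph_iso G (DK r) \<or> (\<exists>G'\<in>S. digraph_iso G G'))}"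

definition hajos_step :: "nat \<Rightarrow> digraph set \<Rightarrow> digraph \<Rightarrow> bool" where
  "hajos_step r S D \<longleftrightarrow>
     (\<exists>G\<in>available r S. \<exists>I v. identification_ok G I v \<and> D = identify G I v) \<or>
     (\<exists>G1\<in>available r S. \<exists>G2\<in>available r S. \<exists>u1 v1 v2 u2 w.
        join_ok G1 u1 v1 G2 v2 u2 w \<and> D = hajos_join G1 u1 v1 G2 v2 u2 w)"

definition hajos_construction :: "nat \<Rightarrow> digraph list \<Rightarrow> bool" where
  "hajos_construction r Ds \<longleftrightarrow>
     (\<forall>i < length Ds. hajos_step r (set (take i Ds)) (Ds ! i))"

definition hajos_number_r :: "nat \<Rightarrow> digraph \<Rightarrow> nat" where
  "hajos_number_r r H = (LEAST k.
      (k = 0 \<and> digraph_iso H (DK r)) \<or>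
      (\<exists>Ds. hajos_construction r Ds \<and> Ds \<noteq> [] \<and> length Ds = k \<and> digraph_iso (last Ds) H))"

definition hajos_number :: "digraph \<Rightarrow> nat" where
  "hajos_number H = hajos_number_r (dichromatic_number H) H"

end

theory Submission
  imports Defs
begin

definition pm :: "(nat \<Rightarrow> nat) \<Rightarrow> nat \<times> nat \<Rightarrow> nat \<times> nat" where
  "pm f = (\<lambda>(a, b). (f a, f b))"

lemma pm_simp[simp]: "pm f (a, b) = (f a, f b)" by (simp add: pm_def)

definition gmap :: "(nat \<Rightarrow> nat) \<Rightarrow> digraph \<Rightarrow> digraph" where
  "gmap f G = (f ` verts G, pm f ` arcs G)"

lemma verts_gmap[simp]: "verts (gmap f G) = f ` verts G" by (simp add: gmap_def verts_def)
lemma arcs_gmap[simp]: "arcs (gmap f G) = pm f ` arcs G" by (simp add: gmap_def arcs_def)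
lemma verts_pair[simp]: "verts (V, A) = V" by (simp add: verts_def)
lemma arcs_pair[simp]: "arcs (V, A) = A" by (simp add: arcs_def)

lemma identify_gmap: "identify G I v = gmap (\<lambda>x. if x \<in> I then v else x) G"
  unfolding identify_def gmap_def pm_def Let_def by simp

lemma iso_refl: "digraph_iso G G"
  unfolding digraph_iso_def by (rule exI[of _ id]) auto

lemma iso_gmap:
  assumes "is_digraph G" "inj_on f (verts G)"
  shows "digraph_iso G (gmap f G)"
  unfolding digraph_iso_def
proof (rule exI[of _ f], intro conjI ballI)
  show "bij_betw f (verts G) (verts (gmap f G))" using assms(2) by (simp add: bij_betw_def)
  fix x y assume xy: "x \<in> verts G" "y \<in> verts G"
  show "((x, y) \<in> arcs G) = ((f x, f y) \<in> arcs (gmap f G))"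
  proof
    assume "(x, y) \<in> arcs G" then show "(f x, f y) \<in> arcs (gmap f G)" by force
  next
    assume "(f x, f y) \<in> arcs (gmap f G)"
    then obtain a b where ab: "(a, b) \<in> arcs G" "f a = f x" "f b = f y" by auto
    have "a \<in> verts G" "b \<in> verts G" using ab(1) assms(1) unfolding is_digraph_def by auto
    then have "a = x" "b = y" using ab assms(2) xy by (auto dest: inj_onD)
    then show "(x, y) \<in> arcs G" using ab by simp
  qed
qed

lemma iso_sym:
  assumes "digraph_iso G H" shows "digraph_iso H G"
proof -
  obtain f where f: "bij_betw f (verts G) (verts H)"
    "\<forall>x\<in>verts G. \<forall>y\<in>verts G. (x, y) \<in> arcs G \<longleftrightarrow> (f x, f y) \<in> arcs H"
    using assms unfolding digraph_iso_def by blast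
  let ?g = "the_inv_into (verts G) f"
  have g: "bij_betw ?g (verts H) (verts G)" using f(1) by (rule bij_betw_the_inv_into)
  have fg: "f (?g x) = x" if "x \<in> verts H" for x
    using f(1) that by (simp add: bij_betw_def f_the_inv_into_f)
  have gV: "?g x \<in> verts G" if "x \<in> verts H" for x
    using g that by (auto simp: bij_betw_def)
  show ?thesis unfolding digraph_iso_def
    by (rule exI[of _ ?g]) (use g f(2) fg gV in force)
qed

lemma iso_trans:
  assumes "digraph_iso G H" "digraph_iso H K" shows "digraph_iso G K"
proof -
  obtain f where f: "bij_betw f (verts G) (verts H)"
    "\<forall>x\<in>verts G. \<forall>y\<in>verts G. (x, y) \<in> arcs G \<longleftrightarrow> (f x, f y) \<in> arcs H"
    using assms(1) unfolding digraph_iso_def by blast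
  obtain g where g: "bij_betw g (verts H) (verts K)"
    "\<forall>x\<in>verts H. \<forall>y\<in>verts H. (x, y) \<in> arcs H \<longleftrightarrow> (g x, g y) \<in> arcs K"
    using assms(2) unfolding digraph_iso_def by blast
  have fV: "f x \<in> verts H" if "x \<in> verts G" for x using f(1) that by (auto simp: bij_betw_def)
  show ?thesis unfolding digraph_iso_def
    apply (rule exI[of _ "g \<circ> f"])
    using bij_betw_trans[OF f(1) g(1)] f(2) g(2) fV by auto
qed

lemma avail_iso:
  assumes "G \<in> available r S" "is_digraph H" "digraph_iso H G"
  shows "H \<in> available r S"
  using assms iso_trans unfolding available_def by blast

lemma avail_mono: "G \<in> available r S \<Longrightarrow> S \<subseteq> S' \<Longrightarrow> G \<in> available r S'"
  unfolding available_def by blast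

lemma avail_in: "is_digraph G \<Longrightarrow> G \<in> S \<Longrightarrow> G \<in> available r S"
  unfolding available_def using iso_refl by blast

lemma avail_digraph: "G \<in> available r S \<Longrightarrow> is_digraph G"
  unfolding available_def by blast

lemma step_mono: "hajos_step r S D \<Longrightarrow> S \<subseteq> S' \<Longrightarrow> hajos_step r S' D"
  unfolding hajos_step_def using avail_mono by meson

lemma cons_snoc:
  assumes "hajos_construction r Ds" "hajos_step r (set Ds) D"
  shows "hajos_construction r (Ds @ [D])"
  unfolding hajos_construction_def
proof (intro allI impI)
  fix i assume i: "i < length (Ds @ [D])"
  show "hajos_step r (set (take i (Ds @ [D]))) ((Ds @ [D]) ! i)"
  proof (cases "i < length Ds")
    case True
    then show ?thesis using assms(1) unfolding hajos_construction_def
      by (simp add: nth_append)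
  next
    case False
    then have "i = length Ds" using i by simp
    then show ?thesis using assms(2) by simp
  qed
qed

lemma cons_take:
  assumes "hajos_construction r Ds" shows "hajos_construction r (take k Ds)"
  using assms unfolding hajos_construction_def
  by (simp add: min_less_iff_conj)

lemma is_digraph_gmap:
  assumes "is_digraph G" "\<forall>(a,b)\<in>arcs G. f a \<noteq> f b"
  shows "is_digraph (gmap f G)"
  using assms unfolding is_digraph_def by auto

definition nontriv :: "(nat \<Rightarrow> nat) \<Rightarrow> nat set \<Rightarrow> nat set" where
  "nontriv f V = {y. \<exists>x1\<in>V. \<exists>x2\<in>V. x1 \<noteq> x2 \<and> f x1 = y \<and> f x2 = y}"

lemma nontriv_finite: "finite V \<Longrightarrow> finite (nontriv f V)"
  by (rule finite_subset[of _ "f ` V"]) (auto simp: nontriv_def)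

lemma fold_lemma:
  assumes "card (nontriv f (verts G)) = m" "hajos_construction r Ds" "G \<in> available r (set Ds)"
    "\<forall>(a,b)\<in>arcs G. f a \<noteq> f b"
  shows "\<exists>Es. hajos_construction r (Ds @ Es) \<and> length Es \<le> m \<and>
           gmap f G \<in> available r (set (Ds @ Es))"
  using assms
proof (induction m arbitrary: Ds G)
  case 0
  have dg: "is_digraph G" using 0 avail_digraph by blast
  have fin: "finite (nontriv f (verts G))" using dg nontriv_finite unfolding is_digraph_def by blast
  then have "nontriv f (verts G) = {}" using 0 by simp
  then have inj: "inj_on f (verts G)" unfolding nontriv_def inj_on_def by blast
  have "gmap f G \<in> available r (set Ds)"
    using avail_iso[OF 0(3) is_digraph_gmap[OF dg 0(4)] iso_sym[OF iso_gmap[OF dg inj]]] .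
  then show ?case by (intro exI[of _ "[]"]) (use 0 in simp)
next
  case (Suc m)
  have dg: "is_digraph G" using Suc avail_digraph by blast
  have fin: "finite (nontriv f (verts G))" using dg nontriv_finite unfolding is_digraph_def by blast
  have "nontriv f (verts G) \<noteq> {}" using Suc(2) by auto
  then obtain y where y: "y \<in> nontriv f (verts G)" by blast
  then obtain x1 x2 where x12: "x1 \<in> verts G" "x2 \<in> verts G" "x1 \<noteq> x2" "f x1 = y" "f x2 = y"
    unfolding nontriv_def by blast
  define F where "F = {x \<in> verts G. f x = y}"
  define g where "g = (\<lambda>x. if x \<in> F then x1 else x)"
  define G' where "G' = identify G F x1"
  have G'g: "G' = gmap g G" unfolding G'_def g_def identify_gmap ..
  have ok: "identification_ok G F x1"
    unfolding identification_ok_def F_def using x12 Suc(5) by auto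
  have step: "hajos_step r (set Ds) G'"
    unfolding hajos_step_def G'_def using Suc(4) ok by blast
  have fg: "f (g x) = f x" if "x \<in> verts G" for x using that x12 unfolding g_def F_def by auto
  have noloop: "\<forall>(a,b)\<in>arcs G'. f a \<noteq> f b"
  proof
    fix e assume "e \<in> arcs G'"
    then obtain a b where ab: "(a,b) \<in> arcs G" "e = (g a, g b)" unfolding G'g by auto
    have "a \<in> verts G" "b \<in> verts G" using ab dg unfolding is_digraph_def by auto
    then show "case e of (a, b) \<Rightarrow> f a \<noteq> f b" using ab Suc(5) fg by auto
  qed
  have dg': "is_digraph G'"
  proof -
    have "\<forall>(a,b)\<in>arcs G. g a \<noteq> g b"
    proof
      fix e assume "e \<in> arcs G"
      then obtain a b where ab: "(a,b) \<in> arcs G" "e = (a,b)" by (cases e) auto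
      have "a \<in> verts G" "b \<in> verts G" using ab dg unfolding is_digraph_def by auto
      then have "f (g a) \<noteq> f (g b)" using fg Suc(5) ab by auto
      then show "case e of (a, b) \<Rightarrow> g a \<noteq> g b" using ab by auto
    qed
    then show ?thesis unfolding G'g using is_digraph_gmap dg by blast
  qed
  have cons': "hajos_construction r (Ds @ [G'])" using cons_snoc[OF Suc(3) step] .
  have av': "G' \<in> available r (set (Ds @ [G']))" using avail_in[OF dg'] by simp
  have vG': "verts G' = g ` verts G" unfolding G'g by simp
  have nt: "nontriv f (verts G') = nontriv f (verts G) - {y}"
  proof
    show "nontriv f (verts G') \<subseteq> nontriv f (verts G) - {y}"
    proof
      fix z assume "z \<in> nontriv f (verts G')"
      then obtain a b where ab: "a \<in> verts G" "b \<in> verts G" "g a \<noteq> g b" "f (g a) = z" "f (g b) = z"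
        unfolding nontriv_def vG' by blast
      have "z \<noteq> y" using ab x12 unfolding g_def F_def by (auto split: if_splits)
      moreover have "g a \<in> verts G" "g b \<in> verts G" using ab x12 unfolding g_def by auto
      ultimately show "z \<in> nontriv f (verts G) - {y}" using ab unfolding nontriv_def by blast
    qed
  next
    show "nontriv f (verts G) - {y} \<subseteq> nontriv f (verts G')"
    proof
      fix z assume z: "z \<in> nontriv f (verts G) - {y}"
      then obtain a b where ab: "a \<in> verts G" "b \<in> verts G" "a \<noteq> b" "f a = z" "f b = z"
        unfolding nontriv_def by blast
      then have "g a = a" "g b = b" using z unfolding g_def F_def by auto
      have "a \<in> verts G'" "b \<in> verts G'" unfolding vG'
        using image_eqI[of a g a, OF \<open>g a = a\<close>[symmetric] ab(1)] image_eqI[of b g b, OF \<open>g b = b\<close>[symmetric] ab(2)] by auto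
      then show "z \<in> nontriv f (verts G')" using ab unfolding nontriv_def by blast
    qed
  qed
  have cm: "card (nontriv f (verts G')) = m" using nt Suc(2) y fin by simp
  obtain Es where Es: "hajos_construction r (Ds @ [G'] @ Es)" "length Es \<le> m"
     "gmap f G' \<in> available r (set (Ds @ [G'] @ Es))"
    using Suc.IH[OF cm _ av' noloop] cons' by auto
  have "gmap f G' = gmap f G"
  proof -
    have "(f \<circ> g) ` verts G = f ` verts G" by (rule image_cong) (simp_all add: fg)
    then have "f ` g ` verts G = f ` verts G" by (simp add: image_comp)
    moreover have "pm f ` pm g ` arcs G = pm f ` arcs G"
    proof -
      have "pm f (pm g e) = pm f e" if "e \<in> arcs G" for e
        using that dg fg unfolding is_digraph_def by (cases e) auto
      then have "(pm f \<circ> pm g) ` arcs G = pm f ` arcs G" by (intro image_cong) simp_all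
      then show ?thesis by (simp add: image_comp)
    qed
    ultimately show ?thesis unfolding G'g gmap_def by simp
  qed
  then show ?case using Es by (intro exI[of _ "G' # Es"]) auto
qed

lemma fold_lemma':
  assumes "hajos_construction r Ds" "G \<in> available r (set Ds)"
    "\<forall>(a,b)\<in>arcs G. f a \<noteq> f b"
  shows "\<exists>Es. hajos_construction r (Ds @ Es) \<and> length Es \<le> card (nontriv f (verts G)) \<and>
           gmap f G \<in> available r (set (Ds @ Es))"
  using fold_lemma[OF refl assms] .

lemma join_lemma:
  assumes cons: "hajos_construction r Ds"
    and av1: "S1 \<in> available r (set Ds)" and av2: "S2 \<in> available r (set Ds)"
    and inj1: "inj_on g1 (verts S1)" and inj2: "inj_on g2 (verts S2)"
    and st: "(s, t) \<in> arcs S1" and tr: "(t', r') \<in> arcs S2"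
    and gt: "g2 t' = g1 t" and sr: "g1 s \<noteq> g2 r'"
  shows "\<exists>Es. hajos_construction r (Ds @ Es) \<and>
     length Es \<le> 1 + card (g1 ` verts S1 \<inter> g2 ` (verts S2 - {t'})) \<and>
     (g1 ` verts S1 \<union> g2 ` verts S2,
      pm g1 ` (arcs S1 - {(s, t)}) \<union> pm g2 ` (arcs S2 - {(t', r')}) \<union> {(g1 s, g2 r')})
       \<in> available r (set (Ds @ Es))"
proof -
  define e1 where "e1 = (\<lambda>x::nat. 2 * x)"
  define e2 where "e2 = (\<lambda>x::nat. 2 * x + 1)"
  have dg1: "is_digraph S1" and dg2: "is_digraph S2" using av1 av2 avail_digraph by blast+
  have V1: "finite (verts S1)" "arcs S1 \<subseteq> verts S1 \<times> verts S1" "\<And>x. (x,x) \<notin> arcs S1"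
    using dg1 unfolding is_digraph_def by auto
  have V2: "finite (verts S2)" "arcs S2 \<subseteq> verts S2 \<times> verts S2" "\<And>x. (x,x) \<notin> arcs S2"
    using dg2 unfolding is_digraph_def by auto
  have ie1: "inj_on e1 X" for X unfolding e1_def inj_on_def by auto
  have ie2: "inj_on e2 X" for X unfolding e2_def inj_on_def by auto
  define G1 where "G1 = gmap e1 S1"
  define G2 where "G2 = gmap e2 S2"
  have nl1: "\<forall>(a,b)\<in>arcs S1. e1 a \<noteq> e1 b" using V1(3) unfolding e1_def by auto
  have nl2: "\<forall>(a,b)\<in>arcs S2. e2 a \<noteq> e2 b" using V2(3) unfolding e2_def by auto
  have dG1: "is_digraph G1" unfolding G1_def using is_digraph_gmap[OF dg1 nl1] .
  have dG2: "is_digraph G2" unfolding G2_def using is_digraph_gmap[OF dg2 nl2] .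
  have aG1: "G1 \<in> available r (set Ds)"
    unfolding G1_def using avail_iso[OF av1 dG1[unfolded G1_def] iso_sym[OF iso_gmap[OF dg1 ie1]]] .
  have aG2: "G2 \<in> available r (set Ds)"
    unfolding G2_def using avail_iso[OF av2 dG2[unfolded G2_def] iso_sym[OF iso_gmap[OF dg2 ie2]]] .
  have s_ne_t: "s \<noteq> t" using st V1(3) by auto
  have t_ne_r: "t' \<noteq> r'" using tr V2(3) by auto
  have sV: "s \<in> verts S1" "t \<in> verts S1" using st V1(2) by auto
  have tV: "t' \<in> verts S2" "r' \<in> verts S2" using tr V2(2) by auto
  have ok: "join_ok G1 (2*s) (2*t) G2 (2*t'+1) (2*r'+1) (2*t)"
  proof -
    have "verts G1 \<inter> verts G2 = {}" unfolding G1_def G2_def e1_def e2_def by auto presburger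
    moreover have "(2*s, 2*t) \<in> arcs G1" unfolding G1_def arcs_gmap
      using image_eqI[of "(2*s, 2*t)" "pm e1" "(s,t)", OF _ st] unfolding e1_def by simp
    moreover have "(2*t'+1, 2*r'+1) \<in> arcs G2" unfolding G2_def arcs_gmap
      using image_eqI[of "(2*t'+1, 2*r'+1)" "pm e2" "(t',r')", OF _ tr] unfolding e2_def by simp
    ultimately show ?thesis unfolding join_ok_def by simp
  qed
  define J where "J = hajos_join G1 (2*s) (2*t) G2 (2*t'+1) (2*r'+1) (2*t)"
  define f where "f = (\<lambda>x. if x = 2*t \<or> x = 2*t'+1 then 2*t else x)"
  have vJ: "verts J = f ` (e1 ` verts S1 \<union> e2 ` verts S2)"
    unfolding J_def hajos_join_def f_def Let_def G1_def G2_def by simp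
  have aJ: "arcs J = pm f ` ((pm e1 ` arcs S1 - {(2*s, 2*t)}) \<union> (pm e2 ` arcs S2 - {(2*t'+1, 2*r'+1)}))
       \<union> {(2*s, 2*r'+1)}"
    unfolding J_def hajos_join_def f_def Let_def G1_def G2_def by (simp add: pm_def)
  define \<phi> where "\<phi> = (\<lambda>z. if even z then g1 (z div 2) else g2 (z div 2))"
  have \<phi>e1: "\<phi> (e1 x) = g1 x" for x unfolding \<phi>_def e1_def by simp
  have \<phi>e2: "\<phi> (e2 x) = g2 x" for x unfolding \<phi>_def e2_def by simp
  have \<phi>f: "\<phi> (f z) = \<phi> z" for z unfolding f_def using gt \<phi>e1 \<phi>e2 unfolding e1_def e2_def by auto
  have pm1: "pm e1 ` arcs S1 - {(2*s, 2*t)} = pm e1 ` (arcs S1 - {(s,t)})"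
    unfolding e1_def by auto
  have pm2: "pm e2 ` arcs S2 - {(2*t'+1, 2*r'+1)} = pm e2 ` (arcs S2 - {(t',r')})"
    unfolding e2_def by auto
  have noloop: "\<forall>(a,b)\<in>arcs J. \<phi> a \<noteq> \<phi> b"
  proof
    fix x assume "x \<in> arcs J"
    then consider (n) "x = (2*s, 2*r'+1)"
      | (a) z where "z \<in> arcs S1" "x = pm f (pm e1 z)"
      | (b) z where "z \<in> arcs S2" "x = pm f (pm e2 z)"
      unfolding aJ pm1 pm2 by blast
    then show "case x of (a, b) \<Rightarrow> \<phi> a \<noteq> \<phi> b"
    proof cases
      case n then show ?thesis using sr \<phi>e1 \<phi>e2 unfolding e1_def e2_def by auto
    next
      case (a z)
      obtain a b where z: "z = (a, b)" by (cases z)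
      have "a \<noteq> b" "a \<in> verts S1" "b \<in> verts S1" using V1 a z by auto
      then have "g1 a \<noteq> g1 b" using inj1 by (auto dest: inj_onD)
      then show ?thesis using a z \<phi>f \<phi>e1 by simp
    next
      case (b z)
      obtain a b where z: "z = (a, b)" by (cases z)
      have "a \<noteq> b" "a \<in> verts S2" "b \<in> verts S2" using V2 b z by auto
      then have "g2 a \<noteq> g2 b" using inj2 by (auto dest: inj_onD)
      then show ?thesis using b z \<phi>f \<phi>e2 by simp
    qed
  qed
  have dJ: "is_digraph J"
    unfolding is_digraph_def
  proof (intro conjI)
    show "finite (verts J)" unfolding vJ using V1 V2 by simp
    show "\<forall>x. (x, x) \<notin> arcs J" using noloop by auto
    have "f (2*s) = 2*s" "f (2*r'+1) = 2*r'+1" unfolding f_def using s_ne_t t_ne_r by auto presburger+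
    then have "2*s \<in> verts J" "2*r'+1 \<in> verts J" unfolding vJ e1_def e2_def using sV tV
      by (metis UnI1 image_eqI, metis UnI2 image_eqI)
    moreover have "pm f ` ((pm e1 ` arcs S1 - {(2*s, 2*t)}) \<union> (pm e2 ` arcs S2 - {(2*t'+1, 2*r'+1)}))
       \<subseteq> verts J \<times> verts J" unfolding vJ using V1(2) V2(2) by fastforce
    ultimately show "arcs J \<subseteq> verts J \<times> verts J" unfolding aJ by blast
  qed
  have step: "hajos_step r (set Ds) J"
    unfolding hajos_step_def J_def using aG1 aG2 ok by blast
  have cons1: "hajos_construction r (Ds @ [J])" using cons_snoc[OF cons step] .
  have avJ: "J \<in> available r (set (Ds @ [J]))" using avail_in[OF dJ] by simp
  obtain Es where Es: "hajos_construction r (Ds @ [J] @ Es)"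
      "length Es \<le> card (nontriv \<phi> (verts J))" "gmap \<phi> J \<in> available r (set (Ds @ [J] @ Es))"
    using fold_lemma'[OF cons1 avJ noloop] by auto
  have ntsub: "nontriv \<phi> (verts J) \<subseteq> g1 ` verts S1 \<inter> g2 ` (verts S2 - {t'})"
  proof
    fix y assume "y \<in> nontriv \<phi> (verts J)"
    then obtain x1 x2 where x: "x1 \<in> verts J" "x2 \<in> verts J" "x1 \<noteq> x2" "\<phi> x1 = y" "\<phi> x2 = y"
      unfolding nontriv_def by blast
    have cl: "(\<exists>a\<in>verts S1. x = e1 a \<and> \<phi> x = g1 a) \<or> (\<exists>b\<in>verts S2 - {t'}. x = e2 b \<and> \<phi> x = g2 b)"
      if xJ: "x \<in> verts J" for x
    proof -
      obtain z where z: "z \<in> e1 ` verts S1 \<union> e2 ` verts S2" "x = f z" using xJ unfolding vJ by auto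
      show ?thesis
      proof (cases "z = 2*t'+1")
        case True then have "x = e1 t" unfolding z(2) f_def e1_def by simp
        then show ?thesis using sV \<phi>e1 by blast
      next
        case False
        then have xz: "x = z" unfolding z(2) f_def by auto
        from z(1) show ?thesis
        proof
          assume "z \<in> e1 ` verts S1" then show ?thesis using xz \<phi>e1 by blast
        next
          assume "z \<in> e2 ` verts S2"
          then obtain b where "b \<in> verts S2" "z = e2 b" by blast
          moreover then have "b \<noteq> t'" using False unfolding e2_def by auto
          ultimately show ?thesis using xz \<phi>e2 by blast
        qed
      qed
    qed
    have "\<not> (x1 = e1 a \<and> x2 = e1 b)" if "a \<in> verts S1" "b \<in> verts S1" for a b
      using x inj1 that \<phi>e1 by (metis inj_onD)
    moreover have "\<not> (x1 = e2 a \<and> x2 = e2 b)" if "a \<in> verts S2" "b \<in> verts S2" for a b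
      using x inj2 that \<phi>e2 by (metis inj_onD)
    ultimately show "y \<in> g1 ` verts S1 \<inter> g2 ` (verts S2 - {t'})"
      using cl[OF x(1)] cl[OF x(2)]
    proof (elim disjE bexE conjE)
      fix a b assume "\<And>a b. a \<in> verts S1 \<Longrightarrow> b \<in> verts S1 \<Longrightarrow> \<not> (x1 = e1 a \<and> x2 = e1 b)"
        "a \<in> verts S1" "b \<in> verts S1" "x1 = e1 a" "x2 = e1 b"
      then show ?thesis by blast
    next
      fix a b assume "\<And>a b. a \<in> verts S2 \<Longrightarrow> b \<in> verts S2 \<Longrightarrow> \<not> (x1 = e2 a \<and> x2 = e2 b)"
        "a \<in> verts S2 - {t'}" "b \<in> verts S2 - {t'}" "x1 = e2 a" "x2 = e2 b"
      then show ?thesis by blast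
    next
      fix a b assume "a \<in> verts S1" "b \<in> verts S2 - {t'}" "\<phi> x1 = g1 a" "\<phi> x2 = g2 b"
      then show ?thesis using x(4,5) by (metis IntI image_eqI)
    next
      fix a b assume "a \<in> verts S2 - {t'}" "b \<in> verts S1" "\<phi> x1 = g2 a" "\<phi> x2 = g1 b"
      then show ?thesis using x(4,5) by (metis IntI image_eqI)
    qed
  qed
  have "card (nontriv \<phi> (verts J)) \<le> card (g1 ` verts S1 \<inter> g2 ` (verts S2 - {t'}))"
    by (rule card_mono[OF _ ntsub]) (use V1 in simp)
  moreover have "gmap \<phi> J = (g1 ` verts S1 \<union> g2 ` verts S2,
      pm g1 ` (arcs S1 - {(s, t)}) \<union> pm g2 ` (arcs S2 - {(t', r')}) \<union> {(g1 s, g2 r')})"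
  proof -
    have "\<phi> ` verts J = g1 ` verts S1 \<union> g2 ` verts S2"
    proof -
      have "\<phi> ` verts J = (\<phi> \<circ> f) ` (e1 ` verts S1 \<union> e2 ` verts S2)" unfolding vJ by (simp add: image_comp)
      also have "\<dots> = \<phi> ` (e1 ` verts S1 \<union> e2 ` verts S2)" using \<phi>f by (intro image_cong) auto
      also have "\<dots> = g1 ` verts S1 \<union> g2 ` verts S2" using \<phi>e1 \<phi>e2 by (auto simp: image_iff image_Un)
      finally show ?thesis .
    qed
    moreover have "pm \<phi> ` arcs J = pm g1 ` (arcs S1 - {(s, t)}) \<union> pm g2 ` (arcs S2 - {(t', r')}) \<union> {(g1 s, g2 r')}"
    proof -
      have c1: "pm \<phi> (pm f x) = pm \<phi> x" for x using \<phi>f by (cases x) simp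
      have c2: "pm \<phi> (pm e1 x) = pm g1 x" for x using \<phi>e1 by (cases x) simp
      have c3: "pm \<phi> (pm e2 x) = pm g2 x" for x using \<phi>e2 by (cases x) simp
      have "pm \<phi> ` arcs J = pm \<phi> ` (pm e1 ` (arcs S1 - {(s,t)})) \<union> pm \<phi> ` (pm e2 ` (arcs S2 - {(t',r')}))
           \<union> {pm \<phi> (2*s, 2*r'+1)}"
        unfolding aJ pm1 pm2 image_Un image_comp using c1 by (simp add: comp_def)
      also have "\<dots> = pm g1 ` (arcs S1 - {(s, t)}) \<union> pm g2 ` (arcs S2 - {(t', r')}) \<union> {(g1 s, g2 r')}"
        unfolding image_comp comp_def c2 c3 using \<phi>e1[of s] \<phi>e2[of r'] unfolding e1_def e2_def by simp
      finally show ?thesis .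
    qed
    ultimately show ?thesis unfolding gmap_def by simp
  qed
  ultimately show ?thesis using Es by (intro exI[of _ "[J] @ Es"]) auto
qed

definition chord :: "nat \<Rightarrow> nat \<Rightarrow> nat \<Rightarrow> nat \<times> nat" where
  "chord N p u = (u, (u + p) mod N)"

definition St :: "nat \<Rightarrow> nat \<Rightarrow> (nat \<times> nat) set \<Rightarrow> nat set \<Rightarrow> digraph" where
  "St N p M T = ({0..<N}, (arcs (DC N) - M) \<union> chord N p ` T)"

definition rot :: "nat \<Rightarrow> nat \<Rightarrow> nat \<Rightarrow> nat" where
  "rot N k x = (x + k) mod N"

lemma arcs_DC: "arcs (DC N) = {(i, j). i < N \<and> j < N \<and> i \<noteq> j \<and> (j = (i + 1) mod N \<or> i = (j + 1) mod N)}"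
  by (simp add: DC_def arcs_def)
lemma verts_DC[simp]: "verts (DC N) = {0..<N}"
  by (simp add: DC_def verts_def)

lemma rot_lt: "0 < N \<Longrightarrow> rot N k x < N" by (simp add: rot_def)

lemma modN: "(x::nat) < 2 * N \<Longrightarrow> x mod N = (if x < N then x else x - N)"
proof (cases "x < N")
  case False
  assume "x < 2 * N"
  then have "x - N < N" using False by simp
  moreover have "x mod N = (x - N) mod N" using False le_mod_geq by simp
  ultimately show ?thesis using False by simp
qed simp

lemma rot_inj: assumes "x < N" "y < N" "rot N k x = rot N k y" shows "x = y"
proof -
  have N0: "0 < N" using assms by simp
  define k' where "k' = k mod N"
  have k': "k' < N" unfolding k'_def using N0 by simp
  have ex: "(x + k) mod N = (x + k') mod N" "(y + k) mod N = (y + k') mod N"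
    unfolding k'_def by (simp_all add: mod_add_right_eq)
  have "(x + k') mod N = (y + k') mod N" using assms(3) ex by (simp add: rot_def)
  moreover have "(x + k') mod N = (if x + k' < N then x + k' else x + k' - N)"
    using modN[of "x + k'"] assms k' by simp
  moreover have "(y + k') mod N = (if y + k' < N then y + k' else y + k' - N)"
    using modN[of "y + k'"] assms k' by simp
  ultimately have "(if x + k' < N then x + k' else x + k' - N) = (if y + k' < N then y + k' else y + k' - N)"
    by simp
  then show ?thesis using assms k' by (simp split: if_splits)
qed

lemma rot_inj_on: "inj_on (rot N k) {0..<N}"
  unfolding inj_on_def using rot_inj by auto

lemma rot_image: assumes "0 < N" shows "rot N k ` {0..<N} = {0..<N}"
proof -
  have "rot N k ` {0..<N} \<subseteq> {0..<N}" using rot_lt assms by auto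
  moreover have "card (rot N k ` {0..<N}) = card {0..<N}"
    using card_image[OF rot_inj_on] by simp
  ultimately show ?thesis by (simp add: card_subset_eq)
qed

lemma rot_succ: "rot N k ((i + 1) mod N) = (rot N k i + 1) mod N"
  unfolding rot_def by (simp add: mod_simps add.commute add.left_commute)

lemma Dar_rot_sub: assumes "0 < N" shows "pm (rot N k) ` arcs (DC N) \<subseteq> arcs (DC N)"
proof
  fix e assume "e \<in> pm (rot N k) ` arcs (DC N)"
  then obtain i j where ij: "(i, j) \<in> arcs (DC N)" "e = (rot N k i, rot N k j)" by auto
  have ij': "i < N" "j < N" "i \<noteq> j" "j = (i + 1) mod N \<or> i = (j + 1) mod N"
    using ij(1) unfolding arcs_DC by auto
  have "rot N k i \<noteq> rot N k j" using rot_inj ij' by blast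
  moreover have "rot N k j = (rot N k i + 1) mod N \<or> rot N k i = (rot N k j + 1) mod N"
    using ij'(4) rot_succ by metis
  ultimately show "e \<in> arcs (DC N)" unfolding arcs_DC ij(2) using rot_lt assms by auto
qed

lemma Dar_rot: assumes "0 < N" shows "pm (rot N k) ` arcs (DC N) = arcs (DC N)"
proof -
  have fin: "finite (arcs (DC N))" unfolding arcs_DC
    by (rule finite_subset[of _ "{0..<N} \<times> {0..<N}"]) auto
  have inj: "inj_on (pm (rot N k)) (arcs (DC N))"
    unfolding inj_on_def arcs_DC using rot_inj by auto
  have "card (pm (rot N k) ` arcs (DC N)) = card (arcs (DC N))" using card_image[OF inj] .
  then show ?thesis using Dar_rot_sub[OF assms] fin by (simp add: card_subset_eq)
qed

lemma chord_rot: "pm (rot N k) (chord N p u) = chord N p (rot N k u)"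
  unfolding chord_def rot_def by (simp add: mod_simps add.commute add.left_commute)

context
  fixes N p :: nat
  assumes Np: "N = 2 * p - 1" and p3: "3 \<le> p"
begin

lemma N_pos: "0 < N" using Np p3 by simp


lemma chord_notin: assumes "u < N" shows "chord N p u \<notin> arcs (DC N)"
proof
  assume "chord N p u \<in> arcs (DC N)"
  then have h: "(u + p) mod N = (u + 1) mod N \<or> u = ((u + p) mod N + 1) mod N"
    unfolding chord_def arcs_DC by auto
  have pN: "p < N" using Np p3 by auto
  have e1: "(u + p) mod N = (if u + p < N then u + p else u + p - N)"
    using modN[of "u+p"] assms pN by simp
  have e2: "(u + 1) mod N = (if u + 1 < N then u + 1 else u + 1 - N)"
    using modN[of "u+1"] assms pN by simp
  have "(u + p) mod N < N" using N_pos by simp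
  then have "(u + p) mod N + 1 < 2 * N" by simp
  from modN[OF this] have e3: "((u + p) mod N + 1) mod N = (if (u + p) mod N + 1 < N then (u + p) mod N + 1 else (u + p) mod N + 1 - N)" .
  have q: "p + p = N + 1" "3 \<le> p" using Np p3 by auto
  show False
  proof (cases "u + p < N")
    case True
    then have a: "(u + p) mod N = u + p" by simp
    from h show False
    proof
      assume "(u + p) mod N = (u + 1) mod N"
      then have eq: "u + p = (if u + 1 < N then u + 1 else u + 1 - N)" unfolding a e2 .
      show False
      proof (cases "u + 1 < N")
        case True then have "u + p = u + 1" using eq by simp
        then show False using q by linarith
      next
        case F2: False then have "u + p = u + 1 - N" using eq by simp
        then show False using q assms F2 by linarith
      qed
    next
      assume h2: "u = ((u + p) mod N + 1) mod N"
      have "(if u + p + 1 < N then u + p + 1 else u + p + 1 - N) = u"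
        using h2[symmetric] unfolding e3 unfolding a .
      then show False
      proof (cases "u + p + 1 < N")
        case T2: True then show False using \<open>(if u + p + 1 < N then u + p + 1 else u + p + 1 - N) = u\<close> by simp
      next
        case F2: False
        then have "u + p + 1 - N = u" using \<open>(if u + p + 1 < N then u + p + 1 else u + p + 1 - N) = u\<close> by simp
        then show False using q True F2 by linarith
      qed
    qed
  next
    case False
    then have a: "(u + p) mod N = u + p - N" using e1 by simp
    from h show False
    proof
      assume "(u + p) mod N = (u + 1) mod N"
      then have eq: "u + p - N = (if u + 1 < N then u + 1 else u + 1 - N)" unfolding a e2 .
      show False
      proof (cases "u + 1 < N")
        case True then have "u + p - N = u + 1" using eq by simp
        then show False using pN False by linarith
      next
        case F2: False then have "u + p - N = u + 1 - N" using eq by simp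
        then show False using q assms False F2 by linarith
      qed
    next
      assume h2: "u = ((u + p) mod N + 1) mod N"
      have lt: "u + p - N + 1 < N" using assms pN False by linarith
      have "(if u + p - N + 1 < N then u + p - N + 1 else u + p - N + 1 - N) = u"
        using h2[symmetric] unfolding e3 unfolding a .
      then have "u + p - N + 1 = u" using lt by simp
      then show False using q False by linarith
    qed
  qed
qed

lemma two_p: "(u + p + p) mod N = (u + 1) mod N"
proof -
  have "u + p + p = (u + 1) + N" using Np p3 by simp
  then show ?thesis by (simp only: mod_add_self2)
qed

lemma St_digraph: assumes "T \<subseteq> {0..<N}" shows "is_digraph (St N p M T)"
  unfolding is_digraph_def
proof (intro conjI)
  show "finite (verts (St N p M T))" by (simp add: St_def)
  show "arcs (St N p M T) \<subseteq> verts (St N p M T) \<times> verts (St N p M T)"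
    using assms N_pos unfolding St_def arcs_DC chord_def by auto
  show "\<forall>x. (x, x) \<notin> arcs (St N p M T)"
  proof (intro allI notI)
    fix x assume "(x, x) \<in> arcs (St N p M T)"
    then consider "(x, x) \<in> arcs (DC N)" | "x \<in> T" "(x + p) mod N = x"
      unfolding St_def chord_def by auto
    then show False
    proof cases
      case 1 then show ?thesis unfolding arcs_DC by auto
    next
      case 2
      have "x < N" using 2 assms by auto
      have q: "p + p = N + 1" "3 \<le> p" using Np p3 by auto
      have xp: "x + p < 2 * N" using \<open>x < N\<close> q by simp
      have "(if x + p < N then x + p else x + p - N) = x" using trans[OF sym[OF modN[OF xp]] 2(2)] .
      then show ?thesis
      proof (cases "x + p < N")
        case True then show False using \<open>(if x + p < N then x + p else x + p - N) = x\<close> q by simp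
      next
        case False
        then have "x + p - N = x" using \<open>(if x + p < N then x + p else x + p - N) = x\<close> by simp
        then show False using q False \<open>x < N\<close> by linarith
      qed
    qed
  qed
qed

end

lemma succ_ne: assumes "(u::nat) < N" "2 \<le> N" shows "(u + 1) mod N \<noteq> u"
proof (cases "u + 1 < N")
  case True then show ?thesis by simp
next
  case False then have e: "u + 1 = N" using assms by simp
  then have "(u + 1) mod N = 0" by simp
  moreover have "u \<noteq> 0" using e assms(2) by simp
  ultimately show ?thesis by simp
qed

lemma pm_id: "pm id ` X = X" by (force simp: pm_def)

context
  fixes N p :: nat
  assumes Np: "N = 2 * p - 1" and p3: "3 \<le> p"
begin

lemma rot_chord_head: "rot N k u2 = (u + p) mod N \<Longrightarrow> rot N k ((u2 + p) mod N) = (u + 1) mod N"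
proof -
  assume h: "rot N k u2 = (u + p) mod N"
  have "rot N k ((u2 + p) mod N) = ((u2 + k) mod N + p) mod N"
    unfolding rot_def by (simp add: mod_simps add.commute add.left_commute)
  also have "\<dots> = ((u + p) mod N + p) mod N" using h unfolding rot_def by simp
  also have "\<dots> = (u + p + p) mod N" by (simp add: mod_simps)
  also have "\<dots> = (u + 1) mod N" using two_p[OF Np p3] .
  finally show ?thesis .
qed

lemma chord_step:
  assumes cons: "hajos_construction r Ds"
    and a1: "St N p M1 T1 \<in> available r (set Ds)" and a2: "St N p M2 T2 \<in> available r (set Ds)"
    and T1: "T1 \<subseteq> {0..<N}" and T2: "T2 \<subseteq> {0..<N}"
    and u: "u \<in> T1" and u2: "u2 \<in> T2" and k: "rot N k u2 = (u + p) mod N"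
    and M: "M1 \<inter> pm (rot N k) ` M2 = {}"
  shows "\<exists>Es. hajos_construction r (Ds @ Es) \<and> length Es \<le> N \<and>
     St N p {} ((T1 - {u}) \<union> (rot N k ` T2 - {rot N k u2})) \<in> available r (set (Ds @ Es))"
proof -
  have N0: "0 < N" using N_pos[OF Np p3] .
  have N5: "5 \<le> N" using Np p3 by simp
  have uN: "u < N" "u2 < N" using u u2 T1 T2 by auto
  let ?\<rho> = "rot N k"
  have vS: "verts (St N p M T) = {0..<N}" for M T by (simp add: St_def)
  have aS: "arcs (St N p M T) = (arcs (DC N) - M) \<union> chord N p ` T" for M T by (simp add: St_def)
  have inj1: "inj_on id (verts (St N p M1 T1))" by simp
  have inj2: "inj_on ?\<rho> (verts (St N p M2 T2))" unfolding vS by (rule rot_inj_on)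
  have st: "(u, (u + p) mod N) \<in> arcs (St N p M1 T1)" unfolding aS chord_def using u by auto
  have tr: "(u2, (u2 + p) mod N) \<in> arcs (St N p M2 T2)" unfolding aS chord_def using u2 by auto
  have gt: "?\<rho> u2 = id ((u + p) mod N)" using k by simp
  have hd: "?\<rho> ((u2 + p) mod N) = (u + 1) mod N" using rot_chord_head[OF k] .
  have sr: "id u \<noteq> ?\<rho> ((u2 + p) mod N)"
  proof
    assume "id u = ?\<rho> ((u2 + p) mod N)"
    then have uu: "u = (u + 1) mod N" using hd by simp
    then show False using succ_ne[of u N] uN N5 by simp
  qed
  obtain Es where Es: "hajos_construction r (Ds @ Es)"
    "length Es \<le> 1 + card (id ` verts (St N p M1 T1) \<inter> ?\<rho> ` (verts (St N p M2 T2) - {u2}))"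
    "(id ` verts (St N p M1 T1) \<union> ?\<rho> ` verts (St N p M2 T2),
      pm id ` (arcs (St N p M1 T1) - {(u, (u + p) mod N)}) \<union> pm ?\<rho> ` (arcs (St N p M2 T2) - {(u2, (u2 + p) mod N)})
      \<union> {(id u, ?\<rho> ((u2 + p) mod N))}) \<in> available r (set (Ds @ Es))"
    using join_lemma[OF cons a1 a2 inj1 inj2 st tr gt sr] by blast
  have card: "card (id ` verts (St N p M1 T1) \<inter> ?\<rho> ` (verts (St N p M2 T2) - {u2})) \<le> N - 1"
  proof -
    have "id ` verts (St N p M1 T1) \<inter> ?\<rho> ` (verts (St N p M2 T2) - {u2}) \<subseteq> {0..<N} - {?\<rho> u2}"
      unfolding vS using rot_inj[of _ N u2 k] rot_lt[OF N0] uN by auto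
    moreover have "card ({0..<N} - {?\<rho> u2}) = N - 1" using rot_lt[OF N0, of k u2] by simp
    ultimately show ?thesis by (metis card_mono finite_Diff finite_atLeastLessThan)
  qed
  have len: "length Es \<le> N" using Es(2) card N0 by linarith
  have eqv: "id ` verts (St N p M1 T1) \<union> ?\<rho> ` verts (St N p M2 T2) = {0..<N}"
    unfolding vS rot_image[OF N0] by simp
  let ?D = "arcs (DC N)"
  let ?P = "pm ?\<rho>"
  have cn: "chord N p x \<notin> ?D" if "x < N" for x using chord_notin[OF Np p3 that] .
  have ch_inj: "chord N p x = chord N p y \<longleftrightarrow> x = y" for x y by (auto simp add: chord_def)
  have DP: "?P ` ?D = ?D" using Dar_rot[OF N0] .
  have new: "(u, (u + 1) mod N) \<in> ?D"
    unfolding arcs_DC using uN N5 succ_ne[of u N] N0 by auto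
  have eqa: "pm id ` (arcs (St N p M1 T1) - {(u, (u + p) mod N)}) \<union> ?P ` (arcs (St N p M2 T2) - {(u2, (u2 + p) mod N)})
      \<union> {(id u, ?\<rho> ((u2 + p) mod N))} = (?D - {}) \<union> chord N p ` ((T1 - {u}) \<union> (?\<rho> ` T2 - {?\<rho> u2}))"
    (is "?L = ?R")
  proof
    show "?L \<subseteq> ?R"
    proof
      fix x assume xL: "x \<in> ?L"
      have cu: "(u, (u + p) mod N) = chord N p u" "(u2, (u2 + p) mod N) = chord N p u2"
        by (simp_all add: chord_def)
      from xL have "x \<in> arcs (St N p M1 T1) - {chord N p u} \<or> (\<exists>z \<in> arcs (St N p M2 T2) - {chord N p u2}. x = ?P z)
          \<or> x = (u, (u + 1) mod N)"
        unfolding pm_id hd cu by auto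
      then show "x \<in> ?R"
      proof (elim disjE bexE)
        assume "x \<in> arcs (St N p M1 T1) - {chord N p u}"
        then show ?thesis unfolding aS using ch_inj by auto
      next
        fix z assume z: "z \<in> arcs (St N p M2 T2) - {chord N p u2}" "x = ?P z"
        show ?thesis
        proof (cases "z \<in> ?D")
          case True then show ?thesis using z DP by auto
        next
          case False
          then obtain y where y: "y \<in> T2" "z = chord N p y" using z(1) unfolding aS by auto
          then have "y \<noteq> u2" using z(1) by auto
          then have "?\<rho> y \<noteq> ?\<rho> u2" using rot_inj[of y N u2 k] y T2 uN by auto
          then show ?thesis using y z chord_rot by auto
        qed
      next
        assume "x = (u, (u + 1) mod N)" then show ?thesis using new by simp
      qed
    qed
  next
    show "?R \<subseteq> ?L"
    proof
      fix x assume "x \<in> ?R"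
      then consider (a) "x \<in> ?D" | (b) y where "y \<in> T1" "y \<noteq> u" "x = chord N p y"
        | (c) y where "y \<in> T2" "?\<rho> y \<noteq> ?\<rho> u2" "x = chord N p (?\<rho> y)"
        by auto
      then show "x \<in> ?L"
      proof cases
        case a
        show ?thesis
        proof (cases "x \<in> M1")
          case False
          have "x \<noteq> chord N p u" using a cn uN by auto
          then have "x \<in> arcs (St N p M1 T1) - {(u, (u + p) mod N)}"
            unfolding aS chord_def[symmetric] using a False by simp
          then show ?thesis unfolding pm_id by blast
        next
          case True
          obtain z where z: "z \<in> ?D" "x = ?P z" using a DP by (metis imageE)
          have "z \<notin> M2" using True z M by blast
          moreover have "z \<noteq> chord N p u2" using z cn uN by auto
          ultimately have "z \<in> arcs (St N p M2 T2) - {(u2, (u2 + p) mod N)}"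
            unfolding aS chord_def[symmetric] using z by simp
          then show ?thesis using z by blast
        qed
      next
        case (b y)
        then have "x \<in> arcs (St N p M1 T1) - {(u, (u + p) mod N)}"
          unfolding aS chord_def[symmetric] using ch_inj by auto
        then show ?thesis unfolding pm_id by blast
      next
        case (c y)
        then have "y \<noteq> u2" by auto
        then have "chord N p y \<in> arcs (St N p M2 T2) - {(u2, (u2 + p) mod N)}"
          unfolding aS chord_def[symmetric] using c ch_inj by auto
        moreover have "x = ?P (chord N p y)" using c chord_rot by simp
        ultimately show ?thesis by blast
      qed
    qed
  qed
  have "St N p {} ((T1 - {u}) \<union> (?\<rho> ` T2 - {?\<rho> u2})) = (id ` verts (St N p M1 T1) \<union> ?\<rho> ` verts (St N p M2 T2),
      pm id ` (arcs (St N p M1 T1) - {(u, (u + p) mod N)}) \<union> ?P ` (arcs (St N p M2 T2) - {(u2, (u2 + p) mod N)})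
      \<union> {(id u, ?\<rho> ((u2 + p) mod N))})"
    unfolding eqv eqa by (simp add: St_def)
  then show ?thesis using Es(1,3) len by auto
qed

end

lemma DC_arc_iff:
  assumes "3 \<le> N"
  shows "(i, j) \<in> arcs (DC N) \<longleftrightarrow> i < N \<and> j < N \<and>
           (j = i + 1 \<or> i = j + 1 \<or> (i = N - 1 \<and> j = 0) \<or> (i = 0 \<and> j = N - 1))"
proof -
  have a: "(x + 1) mod N = (if x + 1 = N then 0 else x + 1)" if "x < N" for x
  proof (cases "x + 1 < N")
    case False then have "x + 1 = N" using that by simp
    then show ?thesis by simp
  qed simp
  show ?thesis
  proof
    assume h: "(i, j) \<in> arcs (DC N)"
    then have ij: "i < N" "j < N" "i \<noteq> j" "j = (i + 1) mod N \<or> i = (j + 1) mod N"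
      unfolding arcs_DC by auto
    show "i < N \<and> j < N \<and> (j = i + 1 \<or> i = j + 1 \<or> (i = N - 1 \<and> j = 0) \<or> (i = 0 \<and> j = N - 1))"
      using ij a[of i] a[of j] by (auto split: if_splits)
  next
    assume h: "i < N \<and> j < N \<and> (j = i + 1 \<or> i = j + 1 \<or> (i = N - 1 \<and> j = 0) \<or> (i = 0 \<and> j = N - 1))"
    then show "(i, j) \<in> arcs (DC N)" unfolding arcs_DC using a[of i] a[of j] assms by auto
  qed
qed

definition g2R :: "nat \<Rightarrow> nat \<Rightarrow> nat" where "g2R p i = (if i = p - 1 then 0 else p + i)"

context
  fixes N p :: nat
  assumes Np: "N = 2 * p - 1" and p3: "3 \<le> p"
begin

lemma Rst_arcs:
  "pm Suc ` (arcs (DC p) - {(0, p - 1)}) \<union> pm (g2R p) ` (arcs (DC p) - {(0, p - 1)}) \<union> {(1, 0)}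
   = arcs (DC N) - {(0, 1)} \<union> chord N p ` {0, p}"
  (is "?L = ?R")
proof -
  have N3: "3 \<le> N" using Np p3 by simp
  have cp: "chord N p ` {0, p} = {(0, p), (p, 1)}"
  proof -
    have "p mod N = p" using Np p3 by simp
    moreover have "(p + p) mod N = 1" using two_p[OF Np p3, of 0] N3 by simp
    ultimately show ?thesis by (simp add: chord_def)
  qed
  note Dp = DC_arc_iff[OF p3] and DN = DC_arc_iff[OF N3]
  show ?thesis
  proof
    show "?L \<subseteq> ?R"
    proof
      fix x assume "x \<in> ?L"
      then consider (a) z where "z \<in> arcs (DC p) - {(0, p - 1)}" "x = pm Suc z"
        | (b) z where "z \<in> arcs (DC p) - {(0, p - 1)}" "x = pm (g2R p) z"
        | (c) "x = (1, 0)"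
        by blast
      then show "x \<in> ?R"
      proof cases
        case (a z)
        obtain i j where z: "z = (i, j)" by (cases z)
        have hp: "p + p = N + 1" "p < N" using Np p3 by auto
        show ?thesis using a unfolding z cp using Dp[of i j] hp p3 by (auto simp: DN)
      next
        case (b z)
        obtain i j where z: "z = (i, j)" by (cases z)
        have hp: "p + p = N + 1" "p < N" using Np p3 by auto
        show ?thesis using b unfolding z cp using Dp[of i j] hp p3 by (auto simp: g2R_def DN)
      next
        case c then show ?thesis using N3 by (auto simp: DN)
      qed
    qed
  next
    show "?R \<subseteq> ?L"
    proof
      fix x assume xR: "x \<in> ?R"
      obtain a b where x: "x = (a, b)" by (cases x)
      have inA: "(i, j) \<in> arcs (DC p) - {(0, p - 1)}"
        if "i < p" "j < p" "j = i + 1 \<or> i = j + 1 \<or> (i = p - 1 \<and> j = 0)" for i j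
        using that Dp[of i j] p3 by auto
      have L1: "(Suc i, Suc j) \<in> ?L" if "i < p" "j < p" "j = i + 1 \<or> i = j + 1 \<or> (i = p - 1 \<and> j = 0)" for i j
        using inA[OF that] by (intro UnI1 UnI1) (rule image_eqI[where x="(i,j)"], simp_all)
      have L2: "(g2R p i, g2R p j) \<in> ?L" if "i < p" "j < p" "j = i + 1 \<or> i = j + 1 \<or> (i = p - 1 \<and> j = 0)" for i j
        using inA[OF that] by (intro UnI1 UnI2) (rule image_eqI[where x="(i,j)"], simp_all)
      have L3: "(1, 0) \<in> ?L" by simp
      have hp: "p + p = N + 1" using Np p3 by simp
      from xR consider (d) "a < N" "b < N" "b = a + 1 \<or> a = b + 1 \<or> (a = N - 1 \<and> b = 0) \<or> (a = 0 \<and> b = N - 1)" "(a, b) \<noteq> (0, 1)"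
        | (c1) "a = 0" "b = p" | (c2) "a = p" "b = 1"
        unfolding x cp by (auto simp: DN)
      then show "x \<in> ?L"
      proof cases
        case c1
        have "(g2R p (p - 1), g2R p 0) \<in> ?L" using L2[of "p - 1" 0] p3 by simp
        then show ?thesis using c1 p3 unfolding x g2R_def by simp
      next
        case c2
        have "(Suc (p - 1), Suc 0) \<in> ?L" using L1[of "p - 1" 0] p3 by simp
        then show ?thesis using c2 p3 unfolding x by simp
      next
        case d
        consider (f) "b = a + 1" | (r) "a = b + 1" | (w1) "a = N - 1" "b = 0" | (w2) "a = 0" "b = N - 1"
          using d(3) by blast
        then show ?thesis
        proof cases
          case f
          show ?thesis
          proof (cases "a < p")
            case True
            have "a \<noteq> 0" using d(4) f by auto
            then have "(Suc (a - 1), Suc a) \<in> ?L" using L1[of "a - 1" a] True by simp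
            then show ?thesis using \<open>a \<noteq> 0\<close> f unfolding x by simp
          next
            case False
            have "a - p + 1 < p - 1" using d(1,2) f hp False by linarith
            then have "(g2R p (a - p), g2R p (a - p + 1)) \<in> ?L" using L2[of "a - p" "a - p + 1"] by simp
            moreover have "g2R p (a - p) = a" "g2R p (a - p + 1) = b"
              using False f \<open>a - p + 1 < p - 1\<close> unfolding g2R_def by auto
            ultimately show ?thesis unfolding x by simp
          qed
        next
          case r
          show ?thesis
          proof (cases "b = 0")
            case True then show ?thesis using r L3 unfolding x by simp
          next
            case F1: False
            show ?thesis
            proof (cases "b < p")
              case True
              then have "(Suc b, Suc (b - 1)) \<in> ?L" using L1[of b "b - 1"] F1 by simp
              then show ?thesis using F1 r unfolding x by simp
            next
              case False
              have "b - p + 1 < p - 1" using d(1,2) r hp False by linarith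
              then have "(g2R p (b - p + 1), g2R p (b - p)) \<in> ?L" using L2[of "b - p + 1" "b - p"] by simp
              moreover have "g2R p (b - p + 1) = a" "g2R p (b - p) = b"
                using False r \<open>b - p + 1 < p - 1\<close> unfolding g2R_def by auto
              ultimately show ?thesis unfolding x by simp
            qed
          qed
        next
          case w1
          have "(g2R p (p - 2), g2R p (p - 1)) \<in> ?L" by (rule L2) (use p3 in auto)
          moreover have "g2R p (p - 2) = a" "g2R p (p - 1) = b" using w1 hp p3 unfolding g2R_def by auto
          ultimately show ?thesis unfolding x by simp
        next
          case w2
          have "(g2R p (p - 1), g2R p (p - 2)) \<in> ?L" by (rule L2) (use p3 in auto)
          moreover have "g2R p (p - 1) = a" "g2R p (p - 2) = b" using w2 hp p3 unfolding g2R_def by auto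
          ultimately show ?thesis unfolding x by simp
        qed
      qed
    qed
  qed
qed

end

lemma Rst_step:
  assumes Np: "N = 2 * p - 1" and p3: "3 \<le> p"
    and cons: "hajos_construction r Ds" and av: "DC p \<in> available r (set Ds)"
  shows "\<exists>Es. hajos_construction r (Ds @ Es) \<and> length Es \<le> 1 \<and>
     St N p {(0, 1)} {0, p} \<in> available r (set (Ds @ Es))"
proof -
  let ?g2 = "g2R p"
  have g2: "?g2 i = (if i = p - 1 then 0 else p + i)" for i by (simp add: g2R_def)
  have inj1: "inj_on Suc (verts (DC p))" by simp
  have inj2: "inj_on ?g2 (verts (DC p))" unfolding inj_on_def g2 by auto
  have st: "(0, p - 1) \<in> arcs (DC p)" using DC_arc_iff[OF p3] p3 by auto
  have gt: "?g2 0 = Suc (p - 1)" using g2 p3 by simp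
  have sr: "Suc 0 \<noteq> ?g2 (p - 1)" using g2 by simp
  obtain Es where Es: "hajos_construction r (Ds @ Es)"
    "length Es \<le> 1 + card (Suc ` verts (DC p) \<inter> ?g2 ` (verts (DC p) - {0}))"
    "(Suc ` verts (DC p) \<union> ?g2 ` verts (DC p),
      pm Suc ` (arcs (DC p) - {(0, p - 1)}) \<union> pm ?g2 ` (arcs (DC p) - {(0, p - 1)}) \<union> {(Suc 0, ?g2 (p - 1))})
       \<in> available r (set (Ds @ Es))"
    using join_lemma[OF cons av av inj1 inj2 st st gt sr] by blast
  have "Suc ` verts (DC p) \<inter> ?g2 ` (verts (DC p) - {0}) = {}"
    unfolding verts_DC g2 by auto
  then have len: "length Es \<le> 1" using Es(2) by simp
  have vv: "Suc ` verts (DC p) \<union> ?g2 ` verts (DC p) = {0..<N}"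
  proof
    show "Suc ` verts (DC p) \<union> ?g2 ` verts (DC p) \<subseteq> {0..<N}" unfolding verts_DC g2 using Np p3 by auto
    show "{0..<N} \<subseteq> Suc ` verts (DC p) \<union> ?g2 ` verts (DC p)"
    proof
      fix x assume x: "x \<in> {0..<N}"
      show "x \<in> Suc ` verts (DC p) \<union> ?g2 ` verts (DC p)"
      proof (cases "x = 0")
        case True
        then have "x = ?g2 (p - 1)" using g2 by simp
        then show ?thesis using p3 unfolding verts_DC by auto
      next
        case False
        show ?thesis
        proof (cases "x \<le> p")
          case True
          then have "x = Suc (x - 1)" "x - 1 < p" using False by auto
          then show ?thesis unfolding verts_DC by (metis UnI1 atLeastLessThan_iff image_eqI zero_le)
        next
          case F2: False
          then have "x = ?g2 (x - p)" "x - p < p" using x Np g2 by auto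
          then show ?thesis unfolding verts_DC by (metis UnI2 atLeastLessThan_iff image_eqI zero_le)
        qed
      qed
    qed
  qed
  have "St N p {(0, 1)} {0, p} = (Suc ` verts (DC p) \<union> ?g2 ` verts (DC p),
      pm Suc ` (arcs (DC p) - {(0, p - 1)}) \<union> pm ?g2 ` (arcs (DC p) - {(0, p - 1)}) \<union> {(Suc 0, ?g2 (p - 1))})"
    unfolding vv using Rst_arcs[OF Np p3] g2 by (simp add: St_def)
  then show ?thesis using Es(1,3) len by auto
qed

lemma level_step:
  fixes n :: nat
  assumes n1: "1 \<le> n" and cons: "hajos_construction r Ds"
    and av: "DC (2 ^ n + 1) \<in> available r (set Ds)"
  shows "\<exists>Es. hajos_construction r (Ds @ Es) \<and> length Es \<le> 1 + (n + 2) * (2 ^ (n + 1) + 1) \<and>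
     DC (2 ^ (n + 1) + 1) \<in> available r (set (Ds @ Es))"
proof -
  define p where "p = (2::nat) ^ n + 1"
  define N where "N = (2::nat) ^ (n + 1) + 1"
  have Np: "N = 2 * p - 1" unfolding N_def p_def by simp
  have "2 \<le> (2::nat) ^ n" using n1 by (metis power_one_right power_increasing_iff one_less_numeral_iff semiring_norm(76))
  then have p3: "3 \<le> p" unfolding p_def by simp
  have NN: "N = 2 * 2 ^ n + 1" unfolding N_def by simp
  define c where "c j = 2 ^ j + (2::nat) ^ n" for j
  define Mj where "Mj j = (if j = 0 then {(0::nat, 1::nat)} else {})" for j :: nat
  have pN: "p < N" using Np p3 by simp
  obtain E0 where E0: "hajos_construction r (Ds @ E0)" "length E0 \<le> 1"
    "St N p {(0, 1)} {0, p} \<in> available r (set (Ds @ E0))"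
    using Rst_step[OF Np p3 cons] av unfolding p_def by blast
  have chain: "\<And>j. j \<le> n \<Longrightarrow> \<exists>Es. hajos_construction r (Ds @ E0 @ Es) \<and> length Es \<le> j * N \<and>
      St N p (Mj j) {0, c j} \<in> available r (set (Ds @ E0 @ Es))"
  proof -
    fix j show "j \<le> n \<Longrightarrow> \<exists>Es. hajos_construction r (Ds @ E0 @ Es) \<and> length Es \<le> j * N \<and>
      St N p (Mj j) {0, c j} \<in> available r (set (Ds @ E0 @ Es))"
    proof (induction j)
      case 0
      have "c 0 = p" unfolding c_def p_def by simp
      then show ?case using E0 unfolding Mj_def by (intro exI[of _ "[]"]) auto
    next
      case (Suc j)
      then obtain Es where Es: "hajos_construction r (Ds @ E0 @ Es)" "length Es \<le> j * N"
        "St N p (Mj j) {0, c j} \<in> available r (set (Ds @ E0 @ Es))" by auto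
      have jn: "j < n" using Suc by simp
      have pj: "(2::nat) ^ j < 2 ^ n" using jn by simp
      have pj1: "(2::nat) ^ (j + 1) \<le> 2 ^ n" using jn by (intro power_increasing) auto
      have cN: "c j < N" unfolding c_def NN using pj by linarith
      have T: "{0, c j} \<subseteq> {0..<N}" using cN by auto
      have pjN: "(2::nat) ^ j < N" using pj NN by linarith
      have r0: "rot N (2 ^ j) 0 = 2 ^ j" unfolding rot_def using pjN by simp
      have e: "c j + p = 2 ^ j + N" unfolding c_def p_def NN by simp
      have k: "rot N (2 ^ j) 0 = (c j + p) mod N" unfolding r0 e using pjN by simp
      have M: "Mj j \<inter> pm (rot N (2 ^ j)) ` Mj j = {}"
      proof (cases "j = 0")
        case True
        have "rot N 1 0 = 1" unfolding rot_def using pN p3 by simp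
        then show ?thesis using True unfolding Mj_def by auto
      qed (simp add: Mj_def)
      obtain Fs where Fs: "hajos_construction r ((Ds @ E0 @ Es) @ Fs)" "length Fs \<le> N"
        "St N p {} (({0, c j} - {c j}) \<union> (rot N (2 ^ j) ` {0, c j} - {rot N (2 ^ j) 0}))
           \<in> available r (set ((Ds @ E0 @ Es) @ Fs))"
        using chord_step[OF Np p3 Es(1) Es(3) Es(3) T T _ _ k M] by auto
      have cs: "c j + 2 ^ j = c (Suc j)" unfolding c_def by simp
      have csN: "c (Suc j) < N" unfolding c_def NN using pj1 by simp
      have rc: "rot N (2 ^ j) (c j) = c (Suc j)" unfolding rot_def cs using csN by simp
      have im: "rot N (2 ^ j) ` {0, c j} = {2 ^ j, c (Suc j)}" using r0 rc by simp
      have ne: "c (Suc j) \<noteq> 2 ^ j" "c (Suc j) \<noteq> 0" "c j \<noteq> 0" unfolding c_def by simp_all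
      have "({0, c j} - {c j}) \<union> (rot N (2 ^ j) ` {0, c j} - {rot N (2 ^ j) 0}) = {0, c (Suc j)}"
        unfolding im r0 using ne by auto
      moreover have "Mj (Suc j) = {}" unfolding Mj_def by simp
      ultimately show ?case using Fs Es(2) by (intro exI[of _ "Es @ Fs"]) auto
    qed
  qed
  obtain E1 where E1: "hajos_construction r (Ds @ E0 @ E1)" "length E1 \<le> n * N"
      "St N p (Mj n) {0, c n} \<in> available r (set (Ds @ E0 @ E1))"
    using chain[of n] by auto
  have cn: "c n = N - 1" unfolding c_def NN by simp
  have Mn: "Mj n = {}" using n1 unfolding Mj_def by simp
  have Rav: "St N p {(0, 1)} {0, p} \<in> available r (set (Ds @ E0 @ E1))"
    using E0(3) by (rule avail_mono) auto
  have T1: "{0, N - 1} \<subseteq> {0..<N}" "{0, p} \<subseteq> {0..<N}" using pN by auto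
  have kP: "rot N (p - 1) 0 = (N - 1 + p) mod N"
  proof -
    have e: "N - 1 + p = (p - 1) + N" using Np p3 by simp
    have "rot N (p - 1) 0 = p - 1" unfolding rot_def using pN by simp
    moreover have "(N - 1 + p) mod N = p - 1" unfolding e mod_add_self2 using pN by simp
    ultimately show ?thesis by simp
  qed
  obtain E2 where E2: "hajos_construction r ((Ds @ E0 @ E1) @ E2)" "length E2 \<le> N"
     "St N p {} (({0, N - 1} - {N - 1}) \<union> (rot N (p - 1) ` {0, p} - {rot N (p - 1) 0}))
        \<in> available r (set ((Ds @ E0 @ E1) @ E2))"
    using chord_step[OF Np p3 E1(1) E1(3)[unfolded cn Mn] Rav T1 _ _ kP] by auto
  have e2: "p + (p - 1) = N" using Np p3 by simp
  have "rot N (p - 1) p = 0" unfolding rot_def e2 by simp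
  moreover have "rot N (p - 1) 0 = p - 1" unfolding rot_def using pN by simp
  ultimately have "({0, N - 1} - {N - 1}) \<union> (rot N (p - 1) ` {0, p} - {rot N (p - 1) 0}) = {0}"
    using Np p3 by auto
  then have Pav: "St N p {} {0} \<in> available r (set (Ds @ E0 @ E1 @ E2))" using E2(3) by simp
  have kF: "rot N p 0 = (0 + p) mod N" unfolding rot_def by simp
  obtain E3 where E3: "hajos_construction r ((Ds @ E0 @ E1 @ E2) @ E3)" "length E3 \<le> N"
     "St N p {} (({0} - {0}) \<union> (rot N p ` {0} - {rot N p 0})) \<in> available r (set ((Ds @ E0 @ E1 @ E2) @ E3))"
    using chord_step[OF Np p3 _ Pav Pav _ _ _ _ kF] E2(1) pN by auto
  have "St N p {} (({0} - {0}) \<union> (rot N p ` {0} - {rot N p 0})) = DC N"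
    by (simp add: St_def DC_def verts_def arcs_def)
  then have "DC N \<in> available r (set (Ds @ E0 @ E1 @ E2 @ E3))" using E3(3) by simp
  moreover have "length (E0 @ E1 @ E2 @ E3) \<le> 1 + (n + 2) * N"
    using E0(2) E1(2) E2(2) E3(2) by (simp add: algebra_simps)
  ultimately show ?thesis using E3(1) unfolding N_def by (intro exI[of _ "E0 @ E1 @ E2 @ E3"]) auto
qed

lemma DC_digraph: "is_digraph (DC N)"
  unfolding is_digraph_def by (auto simp: arcs_DC)

lemma DC3: "DC 3 = DK 3"
proof -
  have "arcs (DC 3) = {(i, j). i < 3 \<and> j < 3 \<and> i \<noteq> j}"
  proof (rule set_eqI)
    fix x :: "nat \<times> nat"
    obtain i j where x: "x = (i, j)" by (cases x)
    have "(i < 3 \<and> j < 3 \<and> (j = i + 1 \<or> i = j + 1 \<or> (i = 3 - 1 \<and> j = 0) \<or> (i = 0 \<and> j = 3 - 1)))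
          \<longleftrightarrow> (i < 3 \<and> j < 3 \<and> i \<noteq> j)" by presburger
    then show "x \<in> arcs (DC 3) \<longleftrightarrow> x \<in> {(i, j). i < 3 \<and> j < 3 \<and> i \<noteq> j}"
      unfolding x DC_arc_iff[OF order_refl] by simp
  qed
  then show ?thesis unfolding DK_def by (metis DC_def arcs_def arcs_pair verts_DC verts_def prod.collapse)
qed

primrec gg :: "nat \<Rightarrow> nat" where
  "gg 0 = 0"
| "gg (Suc n) = (if n = 0 then 0 else gg n + (n + 2) * (2 ^ (n + 1) + 1) + 1)"

lemma main_constr:
  assumes "1 \<le> n"
  shows "\<exists>Ds. hajos_construction 3 Ds \<and> length Ds \<le> gg n \<and> DC (2 ^ n + 1) \<in> available 3 (set Ds)"
  using assms
proof (induction n)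
  case 0 then show ?case by simp
next
  case (Suc n)
  show ?case
  proof (cases "n = 0")
    case True
    have "DC 3 \<in> available 3 (set [])" unfolding available_def using DC_digraph[of 3] iso_refl[of "DC 3"]
      unfolding DC3 by simp
    moreover have "hajos_construction 3 []" by (simp add: hajos_construction_def)
    ultimately show ?thesis using True by (intro exI[of _ "[]"]) simp
  next
    case False
    then obtain Ds where Ds: "hajos_construction 3 Ds" "length Ds \<le> gg n" "DC (2 ^ n + 1) \<in> available 3 (set Ds)"
      using Suc by auto
    obtain Es where Es: "hajos_construction 3 (Ds @ Es)" "length Es \<le> 1 + (n + 2) * (2 ^ (n + 1) + 1)"
      "DC (2 ^ (n + 1) + 1) \<in> available 3 (set (Ds @ Es))"
      using level_step[OF _ Ds(1) Ds(3)] False by auto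
    show ?thesis using Ds(2) Es False by (intro exI[of _ "Ds @ Es"]) auto
  qed
qed

lemma gg_val: "1 \<le> n \<Longrightarrow> real (gg n) = real n * (2 ^ (n + 2) + real n + 5) / 2 - 7"
proof (induction n)
  case 0 then show ?case by simp
next
  case (Suc n)
  show ?case
  proof (cases "n = 0")
    case True then show ?thesis by simp
  next
    case False
    then have IH: "real (gg n) = real n * (2 ^ (n + 2) + real n + 5) / 2 - 7" using Suc by auto
    have "real (gg (Suc n)) = real (gg n) + (real n + 2) * (2 ^ (n + 1) + 1) + 1"
      using False by (simp; simp add: algebra_simps)
    also have "\<dots> = real (Suc n) * (2 ^ (Suc n + 2) + real (Suc n) + 5) / 2 - 7"
      unfolding IH by (simp add: field_simps power_add; simp add: algebra_simps)
    finally show ?thesis .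
  qed
qed

lemma par2: "(a::nat) mod 2 \<noteq> (a + 1) mod 2" by presburger

lemma par3: "even (x::nat) \<Longrightarrow> (a + x) mod 2 = a mod 2" by presburger

lemma DC_sym: "(a, b) \<in> arcs (DC K) \<Longrightarrow> (b, a) \<in> arcs (DC K)"
  unfolding arcs_DC by auto

lemma dich_DC:
  assumes oK: "odd K" and K3: "3 \<le> K"
  shows "dichromatic_number (DC K) = 3"
  unfolding dichromatic_number_def
proof (rule Least_equality)
  define c where "c x = (if x = K - 1 then 2 else x mod 2)" for x :: nat
  have "acyclic_coloring (DC K) 3 c" unfolding acyclic_coloring_def
  proof (intro conjI allI ballI)
    fix x show "c x < 3" unfolding c_def by auto
  next
    fix i
    have "arcs (DC K) \<inter> ({x. c x = i} \<times> {x. c x = i}) = {}"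
    proof (rule equals0I)
      fix e assume e: "e \<in> arcs (DC K) \<inter> ({x. c x = i} \<times> {x. c x = i})"
      obtain a b where ab: "e = (a, b)" by (cases e)
      have arc: "(a, b) \<in> arcs (DC K)" and cc: "c a = c b" using e ab by auto
      have h: "a < K" "b < K" "b = a + 1 \<or> a = b + 1 \<or> (a = K - 1 \<and> b = 0) \<or> (a = 0 \<and> b = K - 1)"
        using arc DC_arc_iff[OF K3] by auto
      have cl: "c x < 2" if "x \<noteq> K - 1" for x using that unfolding c_def by simp
      have cK: "c (K - 1) = 2" unfolding c_def by simp
      have cx: "c x = x mod 2" if "x \<noteq> K - 1" for x using that unfolding c_def by simp
      have gen: "c x \<noteq> c (x + 1)" if "x + 1 < K" for x
      proof (cases "x + 1 = K - 1")
        case True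
        then have "x \<noteq> K - 1" by simp
        then show ?thesis using cl[of x] cK True by simp
      next
        case False
        moreover have "x \<noteq> K - 1" using that by simp
        ultimately show ?thesis using cx[of x] cx[of "x + 1"] par2[of x] by simp
      qed
      from h(3) show False
      proof (elim disjE conjE)
        assume "b = a + 1" then show False using gen[of a] h cc by simp
      next
        assume "a = b + 1" then show False using gen[of b] h cc by simp
      next
        assume "a = K - 1" "b = 0" then show False using cc cK cx[of 0] K3 by simp
      next
        assume "a = 0" "b = K - 1" then show False using cc cK cx[of 0] K3 by simp
      qed
    qed
    then show "acyclic (arcs (DC K) \<inter> ({x. c x = i} \<times> {x. c x = i}))" by (simp add: acyclic_def)
  qed
  then show "\<exists>c. acyclic_coloring (DC K) 3 c" by blast
next
  fix k assume "\<exists>c. acyclic_coloring (DC K) k c"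
  then obtain c where c: "acyclic_coloring (DC K) k c" by blast
  show "3 \<le> k"
  proof (rule ccontr)
    assume "\<not> 3 \<le> k"
    then have k2: "k \<le> 2" by simp
    have lt: "c x < 2" if "x < K" for x
    proof -
      have "x \<in> verts (DC K)" using that by simp
      then have "c x < k" using c unfolding acyclic_coloring_def by blast
      then show ?thesis using k2 by simp
    qed
    have ne: "c a \<noteq> c b" if "(a, b) \<in> arcs (DC K)" for a b
    proof
      assume eq: "c a = c b"
      let ?r = "arcs (DC K) \<inter> ({x. c x = c a} \<times> {x. c x = c a})"
      have "(a, b) \<in> ?r" "(b, a) \<in> ?r" using that DC_sym[OF that] eq by auto
      then have "(a, a) \<in> ?r\<^sup>+" by (meson trancl.simps)
      moreover have "acyclic ?r" using c unfolding acyclic_coloring_def by blast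
      ultimately show False unfolding acyclic_def by blast
    qed
    have alt: "i < K \<Longrightarrow> c i = (c 0 + i) mod 2" for i
    proof (induction i)
      case 0 then show ?case using lt[of 0] by simp
    next
      case (Suc i)
      have "(i, Suc i) \<in> arcs (DC K)" using Suc.prems DC_arc_iff[OF K3] by simp
      then have "c (Suc i) \<noteq> c i" using ne by (metis)
      moreover have "c i < 2" "c (Suc i) < 2" using lt Suc.prems by auto
      moreover have "c i = (c 0 + i) mod 2" using Suc by simp
      ultimately show ?case by (auto simp: mod_Suc)
    qed
    have "(K - 1, 0) \<in> arcs (DC K)" using DC_arc_iff[OF K3] K3 by simp
    then have "c (K - 1) \<noteq> c 0" using ne by metis
    moreover have "c (K - 1) = (c 0 + (K - 1)) mod 2" by (rule alt) (use K3 in simp)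
    moreover have "even (K - 1)" using oK K3 by simp
    moreover have "c 0 < 2" using lt K3 by simp
    ultimately show False using par3[of "K - 1" "c 0"] by simp
  qed
qed

lemma hn_le:
  assumes cons: "hajos_construction 3 Ds" and av: "DC K \<in> available 3 (set Ds)"
    and oK: "odd K" and K3: "3 \<le> K"
  shows "hajos_number (DC K) \<le> length Ds"
proof -
  let ?P = "\<lambda>k. (k = 0 \<and> digraph_iso (DC K) (DK 3)) \<or>
      (\<exists>Ds. hajos_construction 3 Ds \<and> Ds \<noteq> [] \<and> length Ds = k \<and> digraph_iso (last Ds) (DC K))"
  have hn: "hajos_number (DC K) = (LEAST k. ?P k)"
    unfolding hajos_number_def dich_DC[OF oK K3] hajos_number_r_def ..
  from av consider "digraph_iso (DC K) (DK 3)" | G' where "G' \<in> set Ds" "digraph_iso (DC K) G'"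
    unfolding available_def by blast
  then show ?thesis
  proof cases
    case 1
    then have "?P 0" by simp
    then have "(LEAST k. ?P k) \<le> 0" by (rule Least_le)
    then show ?thesis unfolding hn by simp
  next
    case (2 G')
    then obtain i where i: "i < length Ds" "Ds ! i = G'" by (meson in_set_conv_nth)
    let ?E = "take (Suc i) Ds"
    have "hajos_construction 3 ?E" using cons_take[OF cons] .
    moreover have "?E \<noteq> []" using i by (cases Ds) auto
    moreover have "length ?E = Suc i" using i by simp
    moreover have "last ?E = G'" using i by (simp add: take_Suc_conv_app_nth)
    ultimately have "?P (Suc i)" using iso_sym[OF 2(2)] by blast
    then have "(LEAST k. ?P k) \<le> Suc i" by (rule Least_le)
    then show ?thesis unfolding hn using i by simp
  qed
qed

lemma fold_cycle:
  assumes cons: "hajos_construction r Ds" and av: "DC M \<in> available r (set Ds)"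
    and oK: "odd K" and oM: "odd M" and K5: "5 \<le> K" and KM: "K < M"
  shows "\<exists>Es. hajos_construction r (Ds @ Es) \<and> length Es \<le> 2 \<and> DC K \<in> available r (set (Ds @ Es))"
proof -
  define \<phi> where "\<phi> i = (if i < K then i else if even (i - K) then K - 2 else K - 1)" for i
  have K3: "3 \<le> K" and M3: "3 \<le> M" using K5 KM by auto
  note DK = DC_arc_iff[OF K3] and DM = DC_arc_iff[OF M3]
  have \<phi>lt: "\<phi> i < K" for i unfolding \<phi>_def using K5 by auto
  have \<phi>big: "\<phi> i = K - 2 \<or> \<phi> i = K - 1" if "K \<le> i" for i unfolding \<phi>_def using that by auto
  have \<phi>small: "\<phi> i = i" if "i < K" for i unfolding \<phi>_def using that by auto
  have oo: "odd (M - 1 - K)" using oK oM KM by presburger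
  have \<phi>M: "\<phi> (M - 1) = K - 1" unfolding \<phi>_def using KM oo by simp
  have \<phi>0: "\<phi> 0 = 0" unfolding \<phi>_def using K5 by simp
  have step: "\<phi> (a + 1) = \<phi> a + 1 \<or> \<phi> a = \<phi> (a + 1) + 1" for a
  proof (cases "a + 1 < K")
    case True then show ?thesis using \<phi>small by simp
  next
    case False
    show ?thesis
    proof (cases "a + 1 = K")
      case True
      then have "\<phi> a = K - 1" "\<phi> (a + 1) = K - 2" unfolding \<phi>_def using K5 by auto
      then show ?thesis using K5 by linarith
    next
      case F2: False
      then have ge: "K \<le> a" using False by simp
      then have "Suc a - K = Suc (a - K)" by simp
      then show ?thesis unfolding \<phi>_def using ge K5 by auto
    qed
  qed
  have adjK: "(\<phi> a, \<phi> b) \<in> arcs (DC K)" if "(a, b) \<in> arcs (DC M)" for a b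
  proof -
    have h: "a < M" "b < M" "b = a + 1 \<or> a = b + 1 \<or> (a = M - 1 \<and> b = 0) \<or> (a = 0 \<and> b = M - 1)"
      using that DM by auto
    from h(3) show ?thesis
    proof (elim disjE conjE)
      assume "b = a + 1" then show ?thesis using step[of a] \<phi>lt DK by auto
    next
      assume "a = b + 1" then show ?thesis using step[of b] \<phi>lt DK by auto
    next
      assume "a = M - 1" "b = 0" then show ?thesis using \<phi>M \<phi>0 DK K3 by simp
    next
      assume "a = 0" "b = M - 1" then show ?thesis using \<phi>M \<phi>0 DK K3 by simp
    qed
  qed
  have noloop: "\<forall>(a, b)\<in>arcs (DC M). \<phi> a \<noteq> \<phi> b"
  proof (intro ballI)
    fix e assume "e \<in> arcs (DC M)"
    then obtain a b where e: "e = (a, b)" "(a, b) \<in> arcs (DC M)" by (cases e) auto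
    have "(\<phi> a, \<phi> b) \<in> arcs (DC K)" using adjK e(2) .
    then show "case e of (a, b) \<Rightarrow> \<phi> a \<noteq> \<phi> b" using e(1) by (auto simp: arcs_DC)
  qed
  obtain Es where Es: "hajos_construction r (Ds @ Es)" "length Es \<le> card (nontriv \<phi> (verts (DC M)))"
    "gmap \<phi> (DC M) \<in> available r (set (Ds @ Es))"
    using fold_lemma'[OF cons av noloop] by blast
  have "nontriv \<phi> (verts (DC M)) \<subseteq> {K - 2, K - 1}"
  proof
    fix y assume "y \<in> nontriv \<phi> (verts (DC M))"
    then obtain x1 x2 where x: "x1 \<noteq> x2" "\<phi> x1 = y" "\<phi> x2 = y" unfolding nontriv_def by blast
    show "y \<in> {K - 2, K - 1}"
    proof (rule ccontr)
      assume ny: "y \<notin> {K - 2, K - 1}"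
      have "x1 < K" using \<phi>big[of x1] x ny by (cases "K \<le> x1") auto
      moreover have "x2 < K" using \<phi>big[of x2] x ny by (cases "K \<le> x2") auto
      ultimately show False using x \<phi>small by metis
    qed
  qed
  then have "card (nontriv \<phi> (verts (DC M))) \<le> card {K - 2, K - 1}" using card_mono[of "{K - 2, K - 1}"] by simp
  also have "\<dots> \<le> 2" by (simp add: card_insert_if)
  finally have len: "length Es \<le> 2" using Es(2) by linarith
  have vv: "\<phi> ` verts (DC M) = {0..<K}"
  proof
    show "\<phi> ` verts (DC M) \<subseteq> {0..<K}" using \<phi>lt by auto
    show "{0..<K} \<subseteq> \<phi> ` verts (DC M)"
    proof
      fix x assume "x \<in> {0..<K}"
      then have "x = \<phi> x" "x \<in> verts (DC M)" using \<phi>small KM by auto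
      then show "x \<in> \<phi> ` verts (DC M)" by (metis image_eqI)
    qed
  qed
  have aa: "pm \<phi> ` arcs (DC M) = arcs (DC K)"
  proof
    show "pm \<phi> ` arcs (DC M) \<subseteq> arcs (DC K)" using adjK by auto
    show "arcs (DC K) \<subseteq> pm \<phi> ` arcs (DC M)"
    proof
      fix e assume "e \<in> arcs (DC K)"
      then obtain x y where e: "e = (x, y)" "(x, y) \<in> arcs (DC K)" by (cases e) auto
      have h: "x < K" "y < K" "y = x + 1 \<or> x = y + 1 \<or> (x = K - 1 \<and> y = 0) \<or> (x = 0 \<and> y = K - 1)"
        using e(2) DK by auto
      from h(3) show "e \<in> pm \<phi> ` arcs (DC M)"
      proof (elim disjE conjE)
        assume "y = x + 1"
        then have "(x, y) \<in> arcs (DC M)" "pm \<phi> (x, y) = (x, y)" using h KM DM \<phi>small by auto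
        then show ?thesis using e(1) by (metis image_eqI)
      next
        assume "x = y + 1"
        then have "(x, y) \<in> arcs (DC M)" "pm \<phi> (x, y) = (x, y)" using h KM DM \<phi>small by auto
        then show ?thesis using e(1) by (metis image_eqI)
      next
        assume "x = K - 1" "y = 0"
        then have "(M - 1, 0) \<in> arcs (DC M)" "pm \<phi> (M - 1, 0) = (x, y)" using DM M3 \<phi>M \<phi>0 by auto
        then show ?thesis using e(1) by (metis image_eqI)
      next
        assume "x = 0" "y = K - 1"
        then have "(0, M - 1) \<in> arcs (DC M)" "pm \<phi> (0, M - 1) = (x, y)" using DM M3 \<phi>M \<phi>0 by auto
        then show ?thesis using e(1) by (metis image_eqI)
      qed
    qed
  qed
  have "gmap \<phi> (DC M) = DC K" unfolding gmap_def vv aa by (simp add: DC_def verts_def arcs_def)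
  then show ?thesis using Es(1,3) len by auto
qed

theorem theorem2:
  fixes n :: nat
  assumes "n \<ge> 2"
  shows "real (hajos_number (DC (2 ^ n + 1)))
           \<le> real n * (2 ^ (n + 2) + real n + 5) / 2 - 7
         \<and> (\<forall>m::nat. 2 ^ (n - 1) + 1 < 2 * m + 1 \<and> 2 * m + 1 < 2 ^ n + 1 \<longrightarrow>
           real (hajos_number (DC (2 * m + 1)))
             \<le> real n * (2 ^ (n + 2) + real n + 5) / 2 - 5)"
proof -
  have n1: "1 \<le> n" using assms by simp
  obtain Ds where Ds: "hajos_construction 3 Ds" "length Ds \<le> gg n" "DC (2 ^ n + 1) \<in> available 3 (set Ds)"
    using main_constr[OF n1] by blast
  have oM: "odd ((2::nat) ^ n + 1)" using n1 by simp
  have M3: "3 \<le> (2::nat) ^ n + 1"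
  proof -
    have "(2::nat) ^ 1 \<le> 2 ^ n" using n1 by (intro power_increasing) auto
    then show ?thesis by simp
  qed
  have val: "real (gg n) = real n * (2 ^ (n + 2) + real n + 5) / 2 - 7" using gg_val[OF n1] .
  have h1: "hajos_number (DC (2 ^ n + 1)) \<le> gg n" using hn_le[OF Ds(1) Ds(3) oM M3] Ds(2) by linarith
  have part1: "real (hajos_number (DC (2 ^ n + 1))) \<le> real n * (2 ^ (n + 2) + real n + 5) / 2 - 7"
    using h1 val by (metis of_nat_le_iff)
  have part2: "real (hajos_number (DC (2 * m + 1))) \<le> real n * (2 ^ (n + 2) + real n + 5) / 2 - 5"
    if m: "2 ^ (n - 1) + 1 < 2 * m + 1" "2 * m + 1 < 2 ^ n + 1" for m
  proof -
    have "(2::nat) ^ 1 \<le> 2 ^ (n - 1)" using assms by (intro power_increasing) auto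
    then have K5: "5 \<le> 2 * m + 1" using m(1) by simp
    have oK: "odd (2 * m + 1)" by simp
    obtain Es where Es: "hajos_construction 3 (Ds @ Es)" "length Es \<le> 2" "DC (2 * m + 1) \<in> available 3 (set (Ds @ Es))"
      using fold_cycle[OF Ds(1) Ds(3) oK oM K5 m(2)] by blast
    have "hajos_number (DC (2 * m + 1)) \<le> length (Ds @ Es)" using hn_le[OF Es(1) Es(3) oK] K5 by simp
    then have "hajos_number (DC (2 * m + 1)) \<le> gg n + 2" using Ds(2) Es(2) by simp
    then have "real (hajos_number (DC (2 * m + 1))) \<le> real (gg n) + 2" by linarith
    then show ?thesis using val by simp
  qed
  show ?thesis using part1 part2 by blast
qed

end
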